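(* Let $\mathbf V$ be a monoid variety satisfying $xtx\approx xtx^2$. If $\mathbb M_\lambda(ata^+)\not\subseteq\mathbf V$, then $\mathbf V$ satisfies $xtx\approx x^2tx$.
   Context: Words are elements of the free monoid $\mathfrak A^*$ over a countably infinite alphabet. Let $\tau_1$ be the congruence on $\mathfrak A^*$ generated by $a=aa$ for all letters $a$. Define $\mathbf u\,\lambda\,\mathbf v$ iff $\mathbf u\,\tau_1\,\mathbf v$, $\mathbf u,\mathbf v$ have the same set of multiple (occurring at least twice) letters, and for each multiple letter its first two occurrences are adjacent in $\mathbf u$ iff they are adjacent in $\mathbf v$. For $\lambda$-classes, $\mathtt v\le\mathtt u$ iff $\mathtt u=\mathtt p\mathtt v\mathtt s$ in $\mathfrak A^*/\lambda$. For a set $\mathtt W$ of $\lambda$-classes, $M_\lambda(\mathtt W)$ is the Rees quotient of $\mathfrak A^*/\lambda$ by the ideal of classes not $\le$ any element of $\mathtt W$, and $\mathbb M_\lambda(\mathtt W)$ is the monoid variety it generates. Here $ata^+$ denotes the $\lambda$-class $\{ata^k:k\ge1\}$. *)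

theory Defs
  imports Main
begin

type_synonym word = "nat list"

inductive tau1 :: "word \<Rightarrow> word \<Rightarrow> bool" where
  tau1_refl: "tau1 u u"
| tau1_sym: "tau1 u v \<Longrightarrow> tau1 v u"
| tau1_trans: "tau1 u v \<Longrightarrow> tau1 v w \<Longrightarrow> tau1 u w"
| tau1_step: "tau1 (p @ [a] @ s) (p @ [a, a] @ s)"

definition multiple_letters :: "word \<Rightarrow> nat set" where
  "multiple_letters w = {x. 2 \<le> count_list w x}"

definition first_two_adjacent :: "word \<Rightarrow> nat \<Rightarrow> bool" where
  "first_two_adjacent w x \<longleftrightarrow> (\<exists>p s. w = p @ [x, x] @ s \<and> x \<notin> set p)"

definition lam :: "word \<Rightarrow> word \<Rightarrow> bool" where
  "lam u v \<longleftrightarrow> tau1 u v \<and> multiple_letters u = multiple_letters v \<and>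
     (\<forall>x \<in> multiple_letters u. first_two_adjacent u x \<longleftrightarrow> first_two_adjacent v x)"

definition lam_class :: "word \<Rightarrow> word set" where
  "lam_class w = {v. lam w v}"

definition lam_classes :: "word set set" where
  "lam_classes = range lam_class"

text \<open>v \<le> u iff u = p v s in the quotient monoid A*/lambda.\<close>
definition lam_le :: "word set \<Rightarrow> word set \<Rightarrow> bool" where
  "lam_le V U \<longleftrightarrow> (\<exists>p s u v. u \<in> U \<and> v \<in> V \<and> lam u (p @ v @ s))"

text \<open>The Rees quotient M_lambda(W): elements are None (the zero) or Some C for a
  lambda-class C below some element of W.\<close>
definition Mlam_carrier :: "word set set \<Rightarrow> word set option set" where
  "Mlam_carrier W = {None} \<union> {Some C | C. C \<in> lam_classes \<and> (\<exists>U \<in> W. lam_le C U)}"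

definition Mlam_mult :: "word set set \<Rightarrow> word set option \<Rightarrow> word set option \<Rightarrow> word set option" where
  "Mlam_mult W a b = (case (a, b) of
      (Some C, Some D) \<Rightarrow>
        (let w = (SOME u. u \<in> C) @ (SOME v. v \<in> D) in
           if (\<exists>U \<in> W. lam_le (lam_class w) U) then Some (lam_class w) else None)
    | _ \<Rightarrow> None)"

definition Mlam_one :: "word set option" where
  "Mlam_one = Some (lam_class [])"

definition Mlam_eval :: "word set set \<Rightarrow> (nat \<Rightarrow> word set option) \<Rightarrow> word \<Rightarrow> word set option" where
  "Mlam_eval W \<phi> w = foldr (\<lambda>x acc. Mlam_mult W (\<phi> x) acc) w Mlam_one"

definition Mlam_satisfies :: "word set set \<Rightarrow> word \<Rightarrow> word \<Rightarrow> bool" where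
  "Mlam_satisfies W u v \<longleftrightarrow>
     (\<forall>\<phi>. (\<forall>x. \<phi> x \<in> Mlam_carrier W) \<longrightarrow> Mlam_eval W \<phi> u = Mlam_eval W \<phi> v)"

text \<open>The lambda-class ata^+ = {a t a^k : k \<ge> 1}, with a = letter 0, t = letter 1.\<close>
definition ata_plus :: "word set" where
  "ata_plus = {[0, 1] @ replicate k 0 | k. 1 \<le> k}"

text \<open>Monoid varieties are represented by their equational theories, i.e. fully invariant
  congruences on the free monoid over the countably infinite alphabet.\<close>
definition subst_word :: "(nat \<Rightarrow> word) \<Rightarrow> word \<Rightarrow> word" where
  "subst_word \<sigma> w = concat (map \<sigma> w)"

definition fully_invariant_congruence :: "(word \<times> word) set \<Rightarrow> bool" where
  "fully_invariant_congruence E \<longleftrightarrow> equiv UNIV E \<and>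
     (\<forall>u v p s. (u, v) \<in> E \<longrightarrow> (p @ u @ s, p @ v @ s) \<in> E) \<and>
     (\<forall>\<sigma> u v. (u, v) \<in> E \<longrightarrow> (subst_word \<sigma> u, subst_word \<sigma> v) \<in> E)"

definition Mlam_in_variety :: "word set set \<Rightarrow> (word \<times> word) set \<Rightarrow> bool" where
  "Mlam_in_variety W E \<longleftrightarrow> (\<forall>(u, v) \<in> E. Mlam_satisfies W u v)"

end

theory Submission
  imports Defs
begin


lemma tau1_ctx: "tau1 u v \<Longrightarrow> tau1 (p @ u @ s) (p @ v @ s)"
proof (induction rule: tau1.induct)
  case (tau1_refl u) then show ?case by (rule tau1.tau1_refl)
next
  case (tau1_sym u v) then show ?case by (metis tau1.tau1_sym)
next
  case (tau1_trans u v w) then show ?case by (metis tau1.tau1_trans)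
next
  case (tau1_step q a r)
  have "tau1 ((p @ q) @ [a] @ (r @ s)) ((p @ q) @ [a, a] @ (r @ s))" by (rule tau1.tau1_step)
  then show ?case by simp
qed

lemma tau1_inv: "tau1 u v \<Longrightarrow> set u = set v \<and> (u = [] \<longleftrightarrow> v = []) \<and> hd u = hd v \<and> last u = last v"
proof (induction rule: tau1.induct)
  case (tau1_step p a s)
  then show ?case by (cases p; cases s rule: rev_cases; auto)
qed auto

lemma fta_imp_count: "first_two_adjacent w x \<Longrightarrow> 2 \<le> count_list w x"
  unfolding first_two_adjacent_def by auto

lemma fta_Nil[simp]: "\<not> first_two_adjacent [] x"
  unfolding first_two_adjacent_def by auto

lemma fta_Cons: "first_two_adjacent (y # w) x \<longleftrightarrow> (if y = x then w \<noteq> [] \<and> hd w = x else first_two_adjacent w x)"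
proof
  assume "first_two_adjacent (y # w) x"
  then obtain p s where ps: "y # w = p @ [x, x] @ s" "x \<notin> set p" unfolding first_two_adjacent_def by blast
  show "(if y = x then w \<noteq> [] \<and> hd w = x else first_two_adjacent w x)"
  proof (cases p)
    case Nil then show ?thesis using ps by auto
  next
    case (Cons q p') then show ?thesis using ps unfolding first_two_adjacent_def by auto
  qed
next
  assume h: "(if y = x then w \<noteq> [] \<and> hd w = x else first_two_adjacent w x)"
  show "first_two_adjacent (y # w) x"
  proof (cases "y = x")
    case True
    then have "w \<noteq> [] \<and> hd w = x" using h by simp
    then obtain s where "w = x # s" by (cases w) auto
    then show ?thesis using True unfolding first_two_adjacent_def by (metis append_Cons append_Nil empty_iff empty_set)
  next
    case False
    then obtain p s where "w = p @ [x, x] @ s" "x \<notin> set p" using h unfolding first_two_adjacent_def by auto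
    then show ?thesis using False unfolding first_two_adjacent_def by (metis append_Cons set_ConsD)
  qed
qed

lemma fta_append: "first_two_adjacent (a @ b) x \<longleftrightarrow>
  first_two_adjacent a x \<or> (a \<noteq> [] \<and> last a = x \<and> count_list a x = 1 \<and> b \<noteq> [] \<and> hd b = x)
  \<or> (x \<notin> set a \<and> first_two_adjacent b x)"
proof (induction a)
  case Nil then show ?case by simp
next
  case (Cons y a)
  show ?case
  proof (cases "y = x")
    case True
    then show ?thesis
      by (cases a) (auto simp: fta_Cons count_list_0_iff)
  next
    case False
    have l: "last (y # a) = x \<longleftrightarrow> a \<noteq> [] \<and> last a = x" using False by auto
    have e1: "first_two_adjacent ((y # a) @ b) x = first_two_adjacent (a @ b) x"
      using False by (simp add: fta_Cons)
    have e2: "first_two_adjacent (y # a) x = first_two_adjacent a x"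
      using False by (simp add: fta_Cons)
    have e3: "count_list (y # a) x = count_list a x" "set (y # a) = insert y (set a)" using False by auto
    show ?thesis unfolding e1 e2 e3 l Cons.IH using False by auto
  qed
qed

lemma lam_iff: "lam u v \<longleftrightarrow> tau1 u v \<and> multiple_letters u = multiple_letters v \<and>
   (\<forall>x. first_two_adjacent u x \<longleftrightarrow> first_two_adjacent v x)"
proof -
  have "(\<forall>x \<in> multiple_letters u. first_two_adjacent u x \<longleftrightarrow> first_two_adjacent v x) \<longleftrightarrow>
        (\<forall>x. first_two_adjacent u x \<longleftrightarrow> first_two_adjacent v x)"
    if "multiple_letters u = multiple_letters v"
    using that fta_imp_count unfolding multiple_letters_def by blast
  then show ?thesis unfolding lam_def by blast
qed

lemma lam_refl: "lam u u" unfolding lam_def by (simp add: tau1.tau1_refl)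
lemma lam_sym: "lam u v \<Longrightarrow> lam v u" unfolding lam_iff by (metis tau1.tau1_sym)
lemma lam_trans: "lam u v \<Longrightarrow> lam v w \<Longrightarrow> lam u w" unfolding lam_iff by (metis tau1.tau1_trans)

lemma lam_class_eq: "lam a b \<Longrightarrow> lam_class a = lam_class b"
  unfolding lam_class_def using lam_sym lam_trans by blast

lemma lam_count: assumes "lam u v"
  shows "count_list u x = count_list v x \<or> (2 \<le> count_list u x \<and> 2 \<le> count_list v x)"
proof -
  have s: "set u = set v" using assms tau1_inv unfolding lam_def by blast
  have m: "(2 \<le> count_list u x) = (2 \<le> count_list v x)"
    using assms unfolding lam_def multiple_letters_def by blast
  have z: "(count_list u x = 0) = (count_list v x = 0)" using s by (simp add: count_list_0_iff)
  show ?thesis using m z by linarith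
qed

lemma lam_app_right: assumes "lam u v" shows "lam (u @ s) (v @ s)"
proof -
  have t: "tau1 u v" and m: "multiple_letters u = multiple_letters v"
    and f: "\<And>x. first_two_adjacent u x \<longleftrightarrow> first_two_adjacent v x" using assms unfolding lam_iff by auto
  have i: "set u = set v \<and> (u = [] \<longleftrightarrow> v = []) \<and> hd u = hd v \<and> last u = last v" using tau1_inv t by blast
  have t2: "tau1 (u @ s) (v @ s)" using tau1_ctx[OF t, of "[]" s] by simp
  have "(2 \<le> count_list (u @ s) x) = (2 \<le> count_list (v @ s) x)" for x
    using lam_count[OF assms, of x] by auto
  then have m2: "multiple_letters (u @ s) = multiple_letters (v @ s)"
    unfolding multiple_letters_def by auto
  have c1: "(count_list u x = 1) = (count_list v x = 1)" for x using lam_count[OF assms, of x] by auto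
  have f2: "\<And>x. first_two_adjacent (u @ s) x \<longleftrightarrow> first_two_adjacent (v @ s) x"
    unfolding fta_append using f i c1 by metis
  show ?thesis unfolding lam_iff using t2 m2 f2 by blast
qed

lemma lam_Cons: assumes "lam u v" shows "lam (y # u) (y # v)"
proof -
  have t: "tau1 u v" and m: "multiple_letters u = multiple_letters v"
    and f: "\<And>x. first_two_adjacent u x \<longleftrightarrow> first_two_adjacent v x" using assms unfolding lam_iff by auto
  have i: "set u = set v \<and> (u = [] \<longleftrightarrow> v = []) \<and> hd u = hd v \<and> last u = last v" using tau1_inv t by blast
  have t2: "tau1 (y # u) (y # v)" using tau1_ctx[OF t, of "[y]" "[]"] by simp
  have "(2 \<le> count_list (y # u) x) = (2 \<le> count_list (y # v) x)" for x
    using lam_count[OF assms, of x] by auto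
  then have m2: "multiple_letters (y # u) = multiple_letters (y # v)"
    unfolding multiple_letters_def by auto
  have f2: "\<And>x. first_two_adjacent (y # u) x \<longleftrightarrow> first_two_adjacent (y # v) x"
    unfolding fta_Cons using f i by metis
  show ?thesis unfolding lam_iff using t2 m2 f2 by blast
qed

lemma lam_app_left: "lam u v \<Longrightarrow> lam (p @ u) (p @ v)"
  by (induction p) (auto intro: lam_Cons)

lemma lam_ctx: "lam u v \<Longrightarrow> lam (p @ u @ s) (p @ v @ s)"
  by (intro lam_app_left lam_app_right)

lemma lam_snoc_rep: assumes "c \<in> set u" shows "lam (u @ [c]) (u @ replicate (Suc n) c)"
proof (induction n)
  case 0 then show ?case by (simp add: lam_refl)
next
  case (Suc n)
  let ?w = "u @ replicate n c"
  have cw: "c \<in> set ?w" using assms by simp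
  have t: "tau1 (?w @ [c]) (?w @ [c, c])" using tau1.tau1_step[of ?w c "[]"] by simp
  have m: "multiple_letters (?w @ [c]) = multiple_letters (?w @ [c, c])"
  proof -
    have "count_list ?w c \<noteq> 0" using cw by (simp add: count_list_0_iff)
    then show ?thesis unfolding multiple_letters_def by auto
  qed
  have f: "first_two_adjacent (?w @ [c]) x \<longleftrightarrow> first_two_adjacent (?w @ [c, c]) x" for x
    using cw unfolding fta_append by (cases "x = c") (auto simp: fta_Cons)
  have "lam (?w @ [c]) (?w @ [c, c])" unfolding lam_iff using t m f by blast
  moreover have "replicate n c @ [c] = c # replicate n c" "replicate n c @ [c, c] = c # c # replicate n c"
    by (induction n) auto
  ultimately have "lam (u @ replicate (Suc n) c) (u @ replicate (Suc (Suc n)) c)"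
    by simp
  then show ?case using Suc lam_trans by blast
qed



lemma count_replicate[simp]: "count_list (replicate n a) x = (if a = x then n else 0)"
  by (induction n) auto

definition good :: "word \<Rightarrow> bool" where
  "good z \<longleftrightarrow> (\<exists>p s. p @ z @ s \<in> ata_plus)"

lemma decomp01:
  assumes "set w \<subseteq> {0, 1}" "count_list w 1 = 1"
  shows "\<exists>i j. w = replicate i 0 @ 1 # replicate j 0"
proof -
  obtain pref rest where pr: "w = pref @ 1 # rest" "1 \<notin> set pref" "count_list rest 1 = 0"
    using count_list_Suc_split_first[of w 1 0] assms(2) by auto
  have r: "1 \<notin> set rest" using pr(3) by (simp add: count_list_0_iff)
  have "\<forall>y\<in>set pref. y = 0" using assms(1) pr(1,2) by auto
  then have a: "replicate (length pref) 0 = pref" by (rule replicate_length_same)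
  have "\<forall>y\<in>set rest. y = 0" using assms(1) pr(1) r by auto
  then have b: "replicate (length rest) 0 = rest" by (rule replicate_length_same)
  show ?thesis using a b pr(1) by metis
qed

lemma ata_plus_iff: "x \<in> ata_plus \<longleftrightarrow> (\<exists>k. 1 \<le> k \<and> x = [0, 1] @ replicate k 0)"
  unfolding ata_plus_def by auto

lemma L1: assumes "x \<in> ata_plus" "lam x y" shows "y \<in> ata_plus"
proof -
  obtain k where k: "1 \<le> k" "x = [0, 1] @ replicate k 0" using assms(1) ata_plus_iff by auto
  have t: "tau1 x y" using assms(2) unfolding lam_def by auto
  have i: "set x = set y \<and> (x = [] \<longleftrightarrow> y = []) \<and> hd x = hd y \<and> last x = last y" using tau1_inv t by blast
  have sx: "set x = {0, 1}" using k by auto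
  have hx: "hd x = 0" "last x = 0" using k by auto
  have cx: "count_list x 1 = 1" using k by simp
  have cy: "count_list y 1 = 1" using lam_count[OF assms(2), of 1] cx by auto
  have fx: "\<not> first_two_adjacent x 0" using k by (simp add: fta_Cons)
  have fy: "\<not> first_two_adjacent y 0" using fx assms(2) unfolding lam_iff by blast
  have sy: "set y \<subseteq> {0, 1}" using sx i by simp
  obtain a b where y: "y = replicate a 0 @ 1 # replicate b 0" using decomp01[OF sy cy] by blast
  have hy: "hd y = 0" "last y = 0" using i hx by auto
  have a0: "a \<noteq> 0"
  proof
    assume "a = 0" then have "hd y = 1" using y by simp
    then show False using hy by simp
  qed
  have a1: "a = 1"
  proof (rule ccontr)
    assume "a \<noteq> 1"
    then have "a = Suc (Suc (a - 2))" using a0 by simp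
    then obtain a' where "a = Suc (Suc a')" by blast
    then have "first_two_adjacent y 0" using y by (simp add: fta_Cons)
    then show False using fy by simp
  qed
  have b0: "b \<noteq> 0"
  proof
    assume "b = 0" then have "last y = 1" using y by simp
    then show False using hy by simp
  qed
  have "y = [0, 1] @ replicate b 0" using y a1 by simp
  moreover have "1 \<le> b" using b0 by simp
  ultimately show ?thesis unfolding ata_plus_iff by blast
qed

lemma good_lam: "good z \<Longrightarrow> lam z z' \<Longrightarrow> good z'"
  unfolding good_def using L1 lam_ctx by blast

lemma good_Nil: "good []"
  unfolding good_def ata_plus_iff by (rule exI[of _ "[0,1]"], rule exI[of _ "[0]"]) auto

lemma good_right: "good (a @ b) \<Longrightarrow> good b"
  unfolding good_def by (metis append.assoc)

lemma not_good_11: "\<not> good ([1, 1] @ t)"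
proof
  assume "good ([1, 1] @ t)"
  then obtain p s k where "p @ ([1, 1] @ t) @ s = [0, 1] @ replicate k 0"
    unfolding good_def ata_plus_iff by auto
  then have "count_list (p @ ([1, 1] @ t) @ s) 1 = count_list ([0, 1] @ replicate k (0::nat)) 1" by (simp only:)
  then show False by simp
qed

lemma G1: "(\<exists>U\<in>{ata_plus}. lam_le (lam_class z) U) \<longleftrightarrow> good z"
proof
  assume "\<exists>U\<in>{ata_plus}. lam_le (lam_class z) U"
  then obtain p s u v where "u \<in> ata_plus" "lam z v" "lam u (p @ v @ s)"
    unfolding lam_le_def lam_class_def by auto
  then have "good v" unfolding good_def using L1 by blast
  then show "good z" using good_lam \<open>lam z v\<close> lam_sym by blast
next
  assume "good z"
  then obtain p s where "p @ z @ s \<in> ata_plus" unfolding good_def by auto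
  then show "\<exists>U\<in>{ata_plus}. lam_le (lam_class z) U"
    unfolding lam_le_def lam_class_def using lam_refl by blast
qed

lemma carrier_some:
  assumes "Some C \<in> Mlam_carrier {ata_plus}"
  shows "C = lam_class (SOME u. u \<in> C) \<and> good (SOME u. u \<in> C)"
proof -
  from assms have "C \<in> lam_classes" "\<exists>U\<in>{ata_plus}. lam_le C U" unfolding Mlam_carrier_def by auto
  then obtain r where r: "C = lam_class r" "good r" using G1 unfolding lam_classes_def by auto
  have "r \<in> C" using r lam_refl unfolding lam_class_def by auto
  then have "(SOME u. u \<in> C) \<in> C" by (rule someI)
  then have "lam r (SOME u. u \<in> C)" using r unfolding lam_class_def by auto
  then show ?thesis using r lam_class_eq good_lam by metis
qed

definition sig :: "(nat \<Rightarrow> word set option) \<Rightarrow> nat \<Rightarrow> word" where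
  "sig \<phi> x = (case \<phi> x of None \<Rightarrow> [1, 1] | Some C \<Rightarrow> (SOME u. u \<in> C))"

lemma subst_Cons: "subst_word \<sigma> (x # w) = \<sigma> x @ subst_word \<sigma> w"
  unfolding subst_word_def by simp

lemma eval_char:
  assumes car: "\<forall>x. \<phi> x \<in> Mlam_carrier {ata_plus}"
  shows "Mlam_eval {ata_plus} \<phi> w =
    (if good (subst_word (sig \<phi>) w) then Some (lam_class (subst_word (sig \<phi>) w)) else None)"
proof (induction w)
  case Nil
  show ?case using good_Nil unfolding Mlam_eval_def Mlam_one_def subst_word_def by simp
next
  case (Cons x w)
  let ?t = "subst_word (sig \<phi>) w"
  have ev: "Mlam_eval {ata_plus} \<phi> (x # w) = Mlam_mult {ata_plus} (\<phi> x) (Mlam_eval {ata_plus} \<phi> w)"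
    unfolding Mlam_eval_def by simp
  show ?case
  proof (cases "\<phi> x")
    case None
    then show ?thesis using ev not_good_11 unfolding Mlam_mult_def sig_def subst_Cons by simp
  next
    case (Some C)
    let ?s1 = "SOME u. u \<in> C"
    have c: "C = lam_class ?s1" "good ?s1" using carrier_some car Some by metis+
    have sx: "sig \<phi> x = ?s1" using Some unfolding sig_def by simp
    show ?thesis
    proof (cases "good ?t")
      case False
      then show ?thesis using ev Cons.IH Some good_right unfolding Mlam_mult_def subst_Cons sx by auto
    next
      case True
      let ?t' = "SOME v. v \<in> lam_class ?t"
      have "?t \<in> lam_class ?t" using lam_refl unfolding lam_class_def by auto
      then have "?t' \<in> lam_class ?t" by (rule someI)
      then have l: "lam ?t ?t'" unfolding lam_class_def by auto
      then have l2: "lam (?s1 @ ?t) (?s1 @ ?t')" by (rule lam_app_left)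
      then have g: "good (?s1 @ ?t') = good (?s1 @ ?t)" using good_lam lam_sym by blast
      have e: "lam_class (?s1 @ ?t') = lam_class (?s1 @ ?t)" using l2 lam_class_eq by metis
      have "Mlam_eval {ata_plus} \<phi> (x # w) =
        (if good (?s1 @ ?t') then Some (lam_class (?s1 @ ?t')) else None)"
        using ev Cons.IH True Some G1 unfolding Mlam_mult_def by simp
      then show ?thesis unfolding g e subst_Cons sx .
    qed
  qed
qed



locale FI =
  fixes E :: "(word \<times> word) set"
  assumes fic: "fully_invariant_congruence E"
    and h: "([0, 1, 0], [0, 1, 0, 0]) \<in> E"
    and ng: "([0, 1, 0], [0, 0, 1, 0]) \<notin> E"
begin

lemma Erefl: "(u, u) \<in> E"
  using fic unfolding fully_invariant_congruence_def equiv_def by (simp add: refl_on_def)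
lemma Esym: "(u, v) \<in> E \<Longrightarrow> (v, u) \<in> E"
  using fic unfolding fully_invariant_congruence_def equiv_def by (meson symD)
lemma Etrans: "(u, v) \<in> E \<Longrightarrow> (v, w) \<in> E \<Longrightarrow> (u, w) \<in> E"
  using fic unfolding fully_invariant_congruence_def equiv_def by (meson transD)
lemma Ectx: "(u, v) \<in> E \<Longrightarrow> (p @ u @ s, p @ v @ s) \<in> E"
  using fic unfolding fully_invariant_congruence_def by blast
lemma Esubst: "(u, v) \<in> E \<Longrightarrow> (subst_word \<sigma> u, subst_word \<sigma> v) \<in> E"
  using fic unfolding fully_invariant_congruence_def by blast

lemma sq: "([0, 0], [0, 0, 0]) \<in> E"
  using Esubst[OF h, of "\<lambda>x. if x = 0 then [0] else []"] unfolding subst_word_def by simp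

lemma pow2: "(replicate 2 0, replicate (k + 2) 0) \<in> E"
proof (induction k)
  case 0 then show ?case by (simp add: Erefl numeral_2_eq_2)
next
  case (Suc k)
  have "([] @ [0, 0] @ replicate k 0, [] @ [0, 0, 0] @ replicate k 0) \<in> E" by (rule Ectx[OF sq])
  then have "(replicate (k + 2) 0, replicate (Suc k + 2) 0) \<in> E" by (simp add: numeral_2_eq_2)
  then show ?case using Suc Etrans by blast
qed

lemma pow: "2 \<le> m \<Longrightarrow> 2 \<le> n \<Longrightarrow> (replicate m 0, replicate n 0) \<in> E"
  using pow2[of "m - 2"] pow2[of "n - 2"] Esym Etrans by (metis le_add_diff_inverse2)

lemma ata1: "([0, 1, 0], [0, 1] @ replicate (k + 1) 0) \<in> E"
proof (induction k)
  case 0 then show ?case by (simp add: Erefl)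
next
  case (Suc k)
  have "([] @ [0, 1, 0] @ replicate k 0, [] @ [0, 1, 0, 0] @ replicate k 0) \<in> E" by (rule Ectx[OF h])
  then have "([0, 1] @ replicate (k + 1) 0, [0, 1] @ replicate (Suc k + 1) 0) \<in> E" by simp
  then show ?case using Suc Etrans by blast
qed

lemma ata: "x \<in> ata_plus \<Longrightarrow> ([0, 1, 0], x) \<in> E"
  unfolding ata_plus_iff using ata1 by (metis le_add_diff_inverse2)

lemma triv: assumes "([], replicate n 0) \<in> E" "1 \<le> n" shows False
proof -
  have e0: "([], [0]) \<in> E"
  proof (cases "n = 1")
    case True then show ?thesis using assms by simp
  next
    case False
    then have n2: "2 \<le> n" using assms by simp
    have a: "(replicate n 0, replicate (Suc n) 0) \<in> E" using pow[OF n2, of "Suc n"] n2 by simp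
    have "([0] @ [] @ [], [0] @ replicate n 0 @ []) \<in> E" by (rule Ectx[OF assms(1)])
    then have b: "([0], replicate (Suc n) 0) \<in> E" by simp
    show ?thesis using assms(1) a b Esym Etrans by blast
  qed
  have "([], [0, 1, 0]) \<in> E" using Esubst[OF e0, of "\<lambda>_. [0, 1, 0]"] unfolding subst_word_def by simp
  moreover have "([], [0, 0, 1, 0]) \<in> E" using Esubst[OF e0, of "\<lambda>_. [0, 0, 1, 0]"] unfolding subst_word_def by simp
  ultimately show False using ng Esym Etrans by blast
qed

lemma idem: assumes "([0], replicate n 0) \<in> E" "2 \<le> n" shows False
proof -
  have "([0], [0, 0]) \<in> E" using assms pow[OF assms(2), of 2] Etrans by (simp add: numeral_2_eq_2)
  then have "([] @ [0] @ [1, 0], [] @ [0, 0] @ [1, 0]) \<in> E" by (rule Ectx)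
  then show False using ng by simp
qed

lemma keep: "subst_word (\<lambda>x. if x = c then [0] else []) w = replicate (count_list w c) 0"
  unfolding subst_word_def by (induction w) auto

lemma rep_lt: assumes "(replicate m 0, replicate n 0) \<in> E" "m < n" "m < 2" shows False
proof (cases "m = 0")
  case True then show False using triv[of n] assms by simp
next
  case False
  then have "m = 1" using assms by simp
  then show False using idem[of n] assms by simp
qed

lemma profile: assumes "(a, b) \<in> E"
  shows "count_list a c = count_list b c \<or> (2 \<le> count_list a c \<and> 2 \<le> count_list b c)"
proof (rule ccontr)
  assume nc: "\<not> ?thesis"
  have e: "(replicate (count_list a c) 0, replicate (count_list b c) 0) \<in> E"
    using Esubst[OF assms, of "\<lambda>x. if x = c then [0] else []"] unfolding keep .
  show False
  proof (cases "count_list a c < count_list b c")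
    case True then show False using rep_lt[OF e] nc by auto
  next
    case False then show False using rep_lt[OF Esym[OF e]] nc by auto
  qed
qed

lemma F: assumes "([0, 1, 0], w) \<in> E" shows "w \<in> ata_plus"
proof -
  have c: "count_list w c = count_list [0, 1, 0] c \<or> (2 \<le> count_list [0, 1, 0] c \<and> 2 \<le> count_list w c)" for c
    using profile[OF assms, of c] by auto
  have sw: "set w \<subseteq> {0, 1}"
  proof
    fix c assume "c \<in> set w"
    then have "count_list w c \<noteq> 0" by (simp add: count_list_0_iff)
    then show "c \<in> {0, 1}" using c[of c] by (auto split: if_splits)
  qed
  have c1: "count_list w 1 = 1" using c[of 1] by simp
  have c0: "2 \<le> count_list w 0" using c[of 0] by auto
  obtain i j where w: "w = replicate i 0 @ 1 # replicate j 0" using decomp01[OF sw c1] by blast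
  have ij: "2 \<le> i + j" using c0 w by simp
  have ctx0: "([0, 0, 1, 0], 0 # w) \<in> E" using Ectx[OF assms, of "[0]" "[]"] by simp
  show ?thesis
  proof (cases "i = 1")
    case True
    then show ?thesis using w ij unfolding ata_plus_iff by auto
  next
    case False
    have "(0 # w, w) \<in> E"
    proof (cases "i = 0")
      case True
      then have "0 # w \<in> ata_plus" using w ij unfolding ata_plus_iff by auto
      then show ?thesis using ata assms Esym Etrans by blast
    next
      case False
      then have "2 \<le> i" using \<open>i \<noteq> 1\<close> by simp
      then have "(replicate (Suc i) 0, replicate i 0) \<in> E" using pow[of "Suc i" i] by simp
      then have "([] @ replicate (Suc i) 0 @ (1 # replicate j 0), [] @ replicate i 0 @ (1 # replicate j 0)) \<in> E"
        by (rule Ectx)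
      then show ?thesis using w by simp
    qed
    then have "([0, 0, 1, 0], [0, 1, 0]) \<in> E" using ctx0 assms Esym Etrans by blast
    then show ?thesis using ng Esym by blast
  qed
qed

end



lemma good_forms: assumes "good a"
  shows "(\<exists>m. a = replicate m 0) \<or> (\<exists>m. a = 1 # replicate m 0) \<or> (\<exists>m. a = 0 # 1 # replicate m 0)"
proof -
  obtain p s k where e: "p @ a @ s = 0 # 1 # replicate k 0"
    using assms unfolding good_def ata_plus_iff by auto
  have rep: "\<exists>m. x = replicate m 0" if "x @ y = replicate n 0" for x y :: word and n
  proof -
    have "\<forall>z\<in>set x. z = 0" using that by (metis in_set_conv_decomp in_set_replicate append.assoc append_Cons)
    then show ?thesis using replicate_length_same by metis
  qed
  show ?thesis
  proof (cases p)
    case Nil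
    then have e1: "a @ s = 0 # 1 # replicate k 0" using e by simp
    show ?thesis
    proof (cases a)
      case Nil then show ?thesis by (metis replicate_0)
    next
      case (Cons y a')
      then have y: "y = 0" and e2: "a' @ s = 1 # replicate k 0" using e1 by auto
      show ?thesis
      proof (cases a')
        case Nil then show ?thesis using Cons y by (metis replicate_0 replicate_Suc)
      next
        case (Cons y' a'')
        then have "y' = 1" "a'' @ s = replicate k 0" using e2 by auto
        then show ?thesis using rep[of a'' s k] Cons \<open>a = y # a'\<close> y by blast
      qed
    qed
  next
    case (Cons q p')
    then have q: "q = 0" and e1: "p' @ a @ s = 1 # replicate k 0" using e by auto
    show ?thesis
    proof (cases p')
      case Nil
      then have e2: "a @ s = 1 # replicate k 0" using e1 by simp
      show ?thesis
      proof (cases a)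
        case Nil then show ?thesis by (metis replicate_0)
      next
        case (Cons y a')
        then have "y = 1" "a' @ s = replicate k 0" using e2 by auto
        then show ?thesis using rep[of a' s k] Cons by blast
      qed
    next
      case (Cons q' p'')
      then have "p'' @ a @ s = replicate k 0" using e1 by auto
      then have "\<exists>m. (p'' @ a) @ s = replicate m 0" by auto
      then obtain m where "(p'' @ a) @ s = replicate m 0" by blast
      then obtain m' where "p'' @ a = replicate m' 0" using rep by blast
      then have "a @ [] = replicate (m' - length p'') 0"
        by (metis append_Nil2 append_eq_conv_conj drop_replicate)
      then show ?thesis using rep by blast
    qed
  qed
qed

lemma good_rep: "good (replicate n 0)"
  unfolding good_def ata_plus_iff
  by (rule exI[of _ "[0, 1]"], rule exI[of _ "[0]"], rule exI[of _ "Suc n"])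
     (simp add: replicate_append_same[symmetric])

lemma good_1rep: "good (1 # replicate n 0)"
  unfolding good_def ata_plus_iff
  by (rule exI[of _ "[0]"], rule exI[of _ "[0]"], rule exI[of _ "Suc n"])
     (simp add: replicate_append_same[symmetric])

lemma good_01rep: "good (0 # 1 # replicate n 0)"
  unfolding good_def ata_plus_iff
  by (rule exI[of _ "[]"], rule exI[of _ "[0]"], rule exI[of _ "Suc n"])
     (simp add: replicate_append_same[symmetric])

lemma lam_rep_gen: assumes "c \<in> set u" "1 \<le> m" "1 \<le> n"
  shows "lam (u @ replicate m c) (u @ replicate n c)"
proof -
  have "lam (u @ [c]) (u @ replicate m c)" using lam_snoc_rep[OF assms(1), of "m - 1"] assms(2) by simp
  moreover have "lam (u @ [c]) (u @ replicate n c)" using lam_snoc_rep[OF assms(1), of "n - 1"] assms(3) by simp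
  ultimately show ?thesis using lam_sym lam_trans by blast
qed

context FI begin

lemma G: assumes ab: "(a, b) \<in> E" and ga: "good a" shows "good b \<and> lam a b"
proof -
  have pr: "count_list a c = count_list b c \<or> (2 \<le> count_list a c \<and> 2 \<le> count_list b c)" for c
    using profile[OF ab] .
  have z: "count_list b c = 0" if "count_list a c = 0" for c using pr[of c] that by auto
  consider (A) m where "a = replicate m 0" | (B) m where "a = 1 # replicate m 0"
    | (C) m where "a = 0 # 1 # replicate m 0"
    using good_forms[OF ga] by blast
  then show ?thesis
  proof cases
    case (A m)
    have "\<forall>y\<in>set b. y = 0"
    proof
      fix y assume "y \<in> set b"
      then have "count_list b y \<noteq> 0" by (simp add: count_list_0_iff)
      then show "y = 0" using z[of y] A by (cases "y = 0") auto
    qed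
    then have b: "b = replicate (length b) 0" using replicate_length_same by metis
    have cm: "m = length b \<or> (2 \<le> m \<and> 2 \<le> length b)" using pr[of 0] A b by (metis count_replicate)
    have "lam a b"
    proof (cases "m = length b")
      case True then show ?thesis using A b lam_refl by metis
    next
      case False
      then have "2 \<le> m" "2 \<le> length b" using cm by auto
      then have "lam ([0] @ replicate (m - 1) 0) ([0] @ replicate (length b - 1) 0)"
        using lam_rep_gen[of 0 "[0]" "m - 1" "length b - 1"] by simp
      moreover have "[0] @ replicate (m - 1) 0 = replicate m 0" "[0] @ replicate (length b - 1) 0 = b"
        using \<open>2 \<le> m\<close> \<open>2 \<le> length b\<close> b by (metis Suc_diff_1 append_Cons append_Nil dual_order.trans
          one_le_numeral order_less_le_trans replicate_Suc zero_less_one)+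
      ultimately show ?thesis using A by metis
    qed
    then show ?thesis using b good_rep by metis
  next
    case (B m)
    show ?thesis
    proof (cases "m = 0")
      case True
      have "\<forall>y\<in>set b. y = 1"
      proof
        fix y assume "y \<in> set b"
        then have "count_list b y \<noteq> 0" by (simp add: count_list_0_iff)
        then show "y = 1" using z[of y] B True by (cases "y = 1") auto
      qed
      then have b: "b = replicate (length b) 1" using replicate_length_same by metis
      have "count_list b 1 = 1" using pr[of 1] B True by auto
      then have "length b = 1" using b by (metis count_replicate)
      then have "b = [1]" using b by (simp add: numeral_2_eq_2)
      then show ?thesis using B True lam_refl good_1rep[of 0] by simp
    next
      case False
      have "([0] @ a @ [], [0] @ b @ []) \<in> E" using Ectx[OF ab] .
      then have "(0 # a, 0 # b) \<in> E" by simp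
      moreover have "([0, 1, 0], 0 # a) \<in> E" using ata[of "0 # a"] B False unfolding ata_plus_iff by auto
      ultimately have "([0, 1, 0], 0 # b) \<in> E" using Etrans by blast
      then have "0 # b \<in> ata_plus" by (rule F)
      then obtain j where j: "1 \<le> j" "b = 1 # replicate j 0" unfolding ata_plus_iff by auto
      have cm: "m = j \<or> (2 \<le> m \<and> 2 \<le> j)" using pr[of 0] B j by simp
      have "lam a b"
      proof (cases "m = j")
        case True then show ?thesis using B j lam_refl by simp
      next
        case False
        then have "2 \<le> m" "2 \<le> j" using cm by auto
        then have "lam ([1, 0] @ replicate (m - 1) 0) ([1, 0] @ replicate (j - 1) 0)"
          using lam_rep_gen[of 0 "[1, 0]" "m - 1" "j - 1"] by simp
        moreover have "[1, 0] @ replicate (m - 1) 0 = 1 # replicate m 0"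
          "[1, 0] @ replicate (j - 1) 0 = 1 # replicate j 0"
          using \<open>2 \<le> m\<close> \<open>2 \<le> j\<close> by (simp_all add: replicate_Suc[symmetric])
        ultimately show ?thesis using B j by (metis append_Cons append_Nil)
      qed
      then show ?thesis using j good_1rep by metis
    qed
  next
    case (C m)
    show ?thesis
    proof (cases "m = 0")
      case False
      then have "a \<in> ata_plus" using C unfolding ata_plus_iff by auto
      then have "([0, 1, 0], b) \<in> E" using ata ab Etrans by blast
      then have "b \<in> ata_plus" by (rule F)
      then obtain j where j: "1 \<le> j" "b = [0, 1] @ replicate j 0" unfolding ata_plus_iff by auto
      have "lam ([0, 1] @ replicate m 0) ([0, 1] @ replicate j 0)"
        using lam_rep_gen[of 0 "[0, 1]" m j] j False by simp
      then show ?thesis using C j good_01rep by simp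
    next
      case True
      have sb: "set b \<subseteq> {0, 1}"
      proof
        fix y assume "y \<in> set b"
        then have "count_list b y \<noteq> 0" by (simp add: count_list_0_iff)
        then show "y \<in> {0, 1}" using z[of y] C True by (cases "y = 0"; cases "y = 1") auto
      qed
      have c1: "count_list b 1 = 1" using pr[of 1] C True by simp
      have c0: "count_list b 0 = 1" using pr[of 0] C True by simp
      obtain i j where b: "b = replicate i 0 @ 1 # replicate j 0" using decomp01[OF sb c1] by blast
      have ij: "i + j = 1" using c0 b by simp
      show ?thesis
      proof (cases "i = 1")
        case True
        then have "b = [0, 1]" using b ij by simp
        then show ?thesis using C \<open>m = 0\<close> lam_refl good_01rep[of 0] by simp
      next
        case False
        then have "i = 0" "j = 1" using ij by auto
        then have "b = [1, 0]" using b by simp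
        moreover have "a = [0, 1]" using C True by simp
        ultimately have "([] @ [0, 1] @ [0], [] @ [1, 0] @ [0]) \<in> E" using Ectx[OF ab, of "[]" "[0]"] by simp
        then have "([0, 1, 0], [1, 0, 0]) \<in> E" by simp
        then have "[1, 0, 0] \<in> ata_plus" by (rule F)
        then show ?thesis unfolding ata_plus_iff by auto
      qed
    qed
  qed
qed

end

theorem lemma4p4:
  fixes E :: "(nat list \<times> nat list) set"
  assumes "fully_invariant_congruence E"
    and "([0, 1, 0], [0, 1, 0, 0]) \<in> E"
    and "\<not> Mlam_in_variety {ata_plus} E"
  shows "([0, 1, 0], [0, 0, 1, 0]) \<in> E"
proof (rule ccontr)
  assume ng: "([0, 1, 0], [0, 0, 1, 0]) \<notin> E"
  interpret FI E using assms(1,2) ng by unfold_locales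
  obtain u v where uv: "(u, v) \<in> E" "\<not> Mlam_satisfies {ata_plus} u v"
    using assms(3) unfolding Mlam_in_variety_def by auto
  then obtain \<phi> where car: "\<forall>x. \<phi> x \<in> Mlam_carrier {ata_plus}"
    and ne: "Mlam_eval {ata_plus} \<phi> u \<noteq> Mlam_eval {ata_plus} \<phi> v"
    unfolding Mlam_satisfies_def by auto
  let ?a = "subst_word (sig \<phi>) u" and ?b = "subst_word (sig \<phi>) v"
  have ab: "(?a, ?b) \<in> E" using Esubst[OF uv(1)] .
  have ne2: "(if good ?a then Some (lam_class ?a) else None) \<noteq> (if good ?b then Some (lam_class ?b) else None)"
    using ne unfolding eval_char[OF car] .
  show False
  proof (cases "good ?a")
    case True
    then have "good ?b \<and> lam ?a ?b" using G[OF ab] by blast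
    then show False using ne2 True lam_class_eq by auto
  next
    case False
    show False
    proof (cases "good ?b")
      case True
      then have "good ?a \<and> lam ?b ?a" using G[OF Esym[OF ab]] by blast
      then show False using False by simp
    next
      case False
      then show False using ne2 \<open>\<not> good ?a\<close> by simp
    qed
  qed
qed

end
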